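(* Let $G$ be an edge-magic $(p,q)$-graph and $n\ge 1$. Let $\alpha$ and $\beta$ be the smallest and the largest valences of edge-magic labelings of $G$, respectively, and suppose $\beta-\alpha<(\alpha-(p+q+2))\,n$. Then for any orientations $\overrightarrow{G}$ of $G$ and $\overrightarrow{K}_{1,n}^l$ of $K_{1,n}^l$, $$|\tau_{\overrightarrow{G}\otimes\overrightarrow{K}_{1,n}^l}|\ \ge\ (n+3)\,|\tau_{G}|.$$
   Context: Graphs may have loops and multiple edges. A $(p,q)$-graph has $p$ vertices and $q$ edges. An edge-magic labeling of a $(p,q)$-graph $G$ is a bijection $f:V(G)\cup E(G)\to[1,p+q]$ such that $f(x)+f(xy)+f(y)$ equals a constant $\mathrm{val}(f)$ (the valence) for every edge $xy$; $G$ is edge-magic if it has one. For a graph $H$, the magic set $\tau_H$ is the set of integers that are valences of edge-magic labelings of $H$; for a digraph, $\tau$ refers to its underlying graph. $K_{1,n}^l$ is the star $K_{1,n}$ with a loop attached at its central vertex. For digraphs $D$ and $F$, $D\otimes F$ is the digraph with vertex set $V(D)\times V(F)$ and arcs $((a,i),(b,j))$ for every arc $(a,b)$ of $D$ and arc $(i,j)$ of $F$ (loops allowed). *)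

theory Defs
  imports Main "Graph_Theory.Digraph"
begin

text \<open>Finite undirected graphs, loops and multiple edges allowed.  Each edge e has
  an (unordered) pair of end vertices, stored as a pair uends G e; a loop has equal ends.\<close>
record ('v,'e) ugraph =
  uverts :: "'v set"
  uedges :: "'e set"
  uends  :: "'e \<Rightarrow> 'v \<times> 'v"

definition wf_ugraph :: "('v,'e) ugraph \<Rightarrow> bool" where
  "wf_ugraph G \<longleftrightarrow> finite (uverts G) \<and> finite (uedges G) \<and>
     (\<forall>e\<in>uedges G. fst (uends G e) \<in> uverts G \<and> snd (uends G e) \<in> uverts G)"

definition edge_magic_labeling :: "('v,'e) ugraph \<Rightarrow> ('v + 'e \<Rightarrow> nat) \<Rightarrow> nat \<Rightarrow> bool" where
  "edge_magic_labeling G f k \<longleftrightarrow>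
     bij_betw f (Inl ` uverts G \<union> Inr ` uedges G) {1 .. card (uverts G) + card (uedges G)} \<and>
     (\<forall>e\<in>uedges G. f (Inl (fst (uends G e))) + f (Inr e) + f (Inl (snd (uends G e))) = k)"

definition edge_magic :: "('v,'e) ugraph \<Rightarrow> bool" where
  "edge_magic G \<longleftrightarrow> (\<exists>f k. edge_magic_labeling G f k)"

definition magic_set :: "('v,'e) ugraph \<Rightarrow> nat set" where
  "magic_set G = {k. \<exists>f. edge_magic_labeling G f k}"

definition underlying :: "('v,'e) pre_digraph \<Rightarrow> ('v,'e) ugraph" where
  "underlying D = \<lparr>uverts = verts D, uedges = arcs D, uends = (\<lambda>a. (tail D a, head D a))\<rparr>"

definition is_orientation :: "('v,'e) ugraph \<Rightarrow> ('v,'e) pre_digraph \<Rightarrow> bool" where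
  "is_orientation G D \<longleftrightarrow> verts D = uverts G \<and> arcs D = uedges G \<and>
     (\<forall>e\<in>uedges G. (tail D e, head D e) = uends G e \<or> (head D e, tail D e) = uends G e)"

definition otimes :: "('a,'b) pre_digraph \<Rightarrow> ('c,'d) pre_digraph \<Rightarrow> ('a \<times> 'c, 'b \<times> 'd) pre_digraph" where
  "otimes D F = \<lparr>verts = verts D \<times> verts F, arcs = arcs D \<times> arcs F,
     tail = (\<lambda>(a,i). (tail D a, tail F i)), head = (\<lambda>(a,i). (head D a, head F i))\<rparr>"

text \<open>K_{1,n}^l: centre 0, leaves 1..n; edge 0 is the loop at 0, edge i joins 0 and i.\<close>
definition star_loop :: "nat \<Rightarrow> (nat, nat) ugraph" where
  "star_loop n = \<lparr>uverts = {0..n}, uedges = {0..n}, uends = (\<lambda>i. (0, i))\<rparr>"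

end

theory Submission
  imports Defs
begin

lemma bij_by_card:
  assumes "finite B" "inj_on h A" "h ` A \<subseteq> B" "card A = card B"
  shows "bij_betw h A B"
proof -
  have "card (h ` A) = card B" using assms(2,4) by (simp add: card_image)
  then have "h ` A = B" using card_subset_eq[OF assms(1,3)] by simp
  then show ?thesis using assms(2) by (simp add: bij_betw_def)
qed

lemma card_dom:
  assumes "finite A" "finite B"
  shows "card (Inl ` A \<union> Inr ` B) = card A + card B"
proof -
  have d: "Inl ` A \<inter> Inr ` B = {}" by auto
  show ?thesis using card_Un_disjoint[OF _ _ d] assms by (simp add: card_image)
qed

lemma div_mod_unique_aux:
  fixes b x y s t :: nat
  assumes "s < b" "t < b" "b * x + s = b * y + t"
  shows "x = y \<and> s = t"
proof -
  have "(b * x + s) div b = x" "(b * x + s) mod b = s" using assms(1) by auto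
  moreover have "(b * y + t) div b = y" "(b * y + t) mod b = t" using assms(2) by auto
  ultimately show ?thesis using assms(3) by metis
qed

lemma mod_shift_inj:
  fixes c n i j :: nat
  assumes "i \<le> n" "j \<le> n" "(c + i) mod (Suc n) = (c + j) mod (Suc n)"
  shows "i = j"
proof (rule ccontr)
  assume ne: "i \<noteq> j"
  { fix a b :: nat assume ab: "a < b" "b \<le> n" "(c + a) mod (Suc n) = (c + b) mod (Suc n)"
    then have "Suc n dvd (c + b) - (c + a)" using mod_eq_dvd_iff_nat[of "c+a" "c+b" "Suc n"] by simp
    then have "Suc n dvd b - a" by simp
    moreover have "0 < b - a" "b - a < Suc n" using ab by auto
    ultimately have False using nat_dvd_not_less by blast }
  note * = this
  show False
  proof (cases "i < j")
    case True then show ?thesis using *[of i j] assms by auto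
  next
    case False then have "j < i" using ne by auto
    then show ?thesis using *[of j i] assms by auto
  qed
qed

lemma prod_lab:
  fixes G :: "('v,'e) ugraph" and DG :: "('v,'e) pre_digraph" and DK :: "(nat,nat) pre_digraph"
    and \<psi> :: "nat \<Rightarrow> nat \<Rightarrow> nat" and W :: "nat \<Rightarrow> nat \<Rightarrow> nat"
  assumes wf: "wf_ugraph G" and oG: "is_orientation G DG" and oK: "is_orientation (star_loop n) DK"
    and lab: "edge_magic_labeling G f k" and c: "c \<le> n"
    and pb: "bij_betw (\<lambda>(m,r). \<psi> m r) ({1..card (uverts G) + card (uedges G)} \<times> {0..n})
               {1..(card (uverts G) + card (uedges G)) * (n+1)}"
    and pw: "\<And>m1 m2 m3 r1 r2 r3. m1 \<in> {1..card (uverts G) + card (uedges G)} \<Longrightarrow>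
               m2 \<in> {1..card (uverts G) + card (uedges G)} \<Longrightarrow>
               m3 \<in> {1..card (uverts G) + card (uedges G)} \<Longrightarrow>
               r1 \<le> n \<Longrightarrow> r2 \<le> n \<Longrightarrow> r3 \<le> n \<Longrightarrow>
               \<psi> m1 r1 + \<psi> m2 r2 + \<psi> m3 r3 = W (m1+m2+m3) (r1+r2+r3)"
  shows "W k (c + n) \<in> magic_set (underlying (otimes DG DK))"
proof -
  define V where "V = uverts G"
  define E where "E = uedges G"
  define N where "N = card V + card E"
  define \<sigma> where "\<sigma> i = (c + i) mod (Suc n)" for i
  define g where "g x = (case x of Inl (v,i) \<Rightarrow> \<psi> (f (Inl v)) (\<sigma> i)
                                | Inr (e,j) \<Rightarrow> \<psi> (f (Inr e)) (n - \<sigma> j))" for x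
  define h where "h x = (case x of Inl (v,i) \<Rightarrow> (f (Inl v), \<sigma> i)
                                | Inr (e,j) \<Rightarrow> (f (Inr e), n - \<sigma> j))" for x
  define H where "H = underlying (otimes DG DK)"
  have vH: "uverts H = V \<times> {0..n}" using oG oK
    by (simp add: H_def V_def underlying_def otimes_def is_orientation_def star_loop_def)
  have eH: "uedges H = E \<times> {0..n}" using oG oK
    by (simp add: H_def E_def underlying_def otimes_def is_orientation_def star_loop_def)
  have endsH: "uends H (e,j) = ((tail DG e, tail DK j), (head DG e, head DK j))" for e j
    by (simp add: H_def underlying_def otimes_def)
  have finV: "finite V" and finE: "finite E" using wf by (auto simp: wf_ugraph_def V_def E_def)
  have fb: "bij_betw f (Inl ` V \<union> Inr ` E) {1..N}"
    using lab by (simp add: edge_magic_labeling_def V_def E_def N_def)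
  have fval: "k = f (Inl (fst (uends G e))) + f (Inr e) + f (Inl (snd (uends G e)))" if "e \<in> E" for e
    using lab that by (simp add: edge_magic_labeling_def E_def)
  have fi: "inj_on f (Inl ` V \<union> Inr ` E)" using fb by (simp add: bij_betw_def)
  have fim: "f ` (Inl ` V \<union> Inr ` E) = {1..N}" using fb by (simp add: bij_betw_def)
  have fr1: "f (Inl v) \<in> {1..N}" if "v \<in> V" for v using fim that by blast
  have fr2: "f (Inr e) \<in> {1..N}" if "e \<in> E" for e using fim that by blast
  have \<sigma>le: "\<sigma> i \<le> n" for i by (simp add: \<sigma>_def less_Suc_eq_le)
  have \<sigma>inj: "i = j" if "i \<le> n" "j \<le> n" "\<sigma> i = \<sigma> j" for i j
    using mod_shift_inj[OF that(1,2)] that(3) by (simp add: \<sigma>_def)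
  have \<sigma>0: "\<sigma> 0 = c" using c by (simp add: \<sigma>_def)
  define D where "D = Inl ` (V \<times> {0..n}) \<union> Inr ` (E \<times> {0..n})"
  have hinj: "inj_on h D"
  proof (rule inj_onI)
    fix x y assume x: "x \<in> D" and y: "y \<in> D" and hxy: "h x = h y"
    show "x = y"
    proof (cases x)
      case (Inl xv)
      then obtain v i where xe: "x = Inl (v,i)" "v \<in> V" "i \<le> n" using x by (auto simp: D_def)
      show ?thesis
      proof (cases y)
        case (Inl yv)
        then obtain w j where ye: "y = Inl (w,j)" "w \<in> V" "j \<le> n" using y by (auto simp: D_def)
        have "f (Inl v) = f (Inl w)" "\<sigma> i = \<sigma> j" using hxy xe ye by (auto simp: h_def)
        then have "Inl v = Inl w" "i = j" using inj_onD[OF fi] \<sigma>inj xe ye by auto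
        then show ?thesis using xe ye by auto
      next
        case (Inr yv)
        then obtain w j where ye: "y = Inr (w,j)" "w \<in> E" "j \<le> n" using y by (auto simp: D_def)
        have "f (Inl v) = f (Inr w)" using hxy xe ye by (auto simp: h_def)
        then have "(Inl v :: 'v + 'e) = Inr w" using inj_onD[OF fi] xe ye by auto
        then show ?thesis by simp
      qed
    next
      case (Inr xv)
      then obtain v i where xe: "x = Inr (v,i)" "v \<in> E" "i \<le> n" using x by (auto simp: D_def)
      show ?thesis
      proof (cases y)
        case (Inl yv)
        then obtain w j where ye: "y = Inl (w,j)" "w \<in> V" "j \<le> n" using y by (auto simp: D_def)
        have "f (Inr v) = f (Inl w)" using hxy xe ye by (auto simp: h_def)
        then have "(Inr v :: 'v + 'e) = Inl w" using inj_onD[OF fi] xe ye by auto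
        then show ?thesis by simp
      next
        case (Inr yv)
        then obtain w j where ye: "y = Inr (w,j)" "w \<in> E" "j \<le> n" using y by (auto simp: D_def)
        have "f (Inr v) = f (Inr w)" "n - \<sigma> i = n - \<sigma> j" using hxy xe ye by (auto simp: h_def)
        moreover have "\<sigma> i \<le> n" "\<sigma> j \<le> n" using \<sigma>le by auto
        ultimately have "Inr v = Inr w" "i = j" using inj_onD[OF fi] \<sigma>inj xe ye by auto
        then show ?thesis using xe ye by auto
      qed
    qed
  qed
  have himg: "h ` D \<subseteq> {1..N} \<times> {0..n}"
    using fr1 fr2 \<sigma>le by (auto simp: D_def h_def)
  have cD: "card D = N * (n+1)"
    using card_dom[of "V \<times> {0..n}" "E \<times> {0..n}"] finV finE
    by (simp add: D_def card_cartesian_product N_def algebra_simps)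
  have hb: "bij_betw h D ({1..N} \<times> {0..n})"
    by (rule bij_by_card[OF _ hinj himg]) (simp_all add: cD card_cartesian_product)
  have gh: "g = (\<lambda>(m,r). \<psi> m r) \<circ> h"
    by (auto simp: fun_eq_iff g_def h_def split: sum.split)
  have gb: "bij_betw g D {1..N * (n+1)}"
    using bij_betw_trans[OF hb pb[folded V_def E_def, folded N_def]] gh by simp
  have cH: "card (uverts H) + card (uedges H) = N * (n+1)"
    using finV finE by (simp add: vH eH card_cartesian_product N_def algebra_simps)
  have valence: "g (Inl (fst (uends H x))) + g (Inr x) + g (Inl (snd (uends H x))) = W k (c + n)"
    if x: "x \<in> uedges H" for x
  proof -
    obtain e j where xe: "x = (e,j)" "e \<in> E" "j \<le> n" using x eH by auto
    obtain a b where ab: "uends G e = (a,b)" by (cases "uends G e")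
    have abV: "a \<in> V" "b \<in> V" using wf xe ab by (auto simp: wf_ugraph_def V_def E_def)
    have kf: "k = f (Inl a) + f (Inr e) + f (Inl b)" using fval[OF xe(2)] ab by simp
    have oGe: "(tail DG e, head DG e) = (a,b) \<or> (head DG e, tail DG e) = (a,b)"
      using oG xe ab by (auto simp: is_orientation_def E_def)
    have oKj: "(tail DK j, head DK j) = (0,j) \<or> (head DK j, tail DK j) = (0,j)"
      using oK xe by (auto simp: is_orientation_def star_loop_def)
    have s1: "f (Inl (tail DG e)) + f (Inr e) + f (Inl (head DG e)) = k"
      using oGe kf by auto
    have s2: "\<sigma> (tail DK j) + (n - \<sigma> j) + \<sigma> (head DK j) = c + n"
      using oKj \<sigma>le[of j] \<sigma>0 by auto
    have tv: "tail DG e \<in> V" "head DG e \<in> V" using oGe abV by auto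
    have "g (Inl (fst (uends H x))) + g (Inr x) + g (Inl (snd (uends H x)))
        = \<psi> (f (Inl (tail DG e))) (\<sigma> (tail DK j)) + \<psi> (f (Inr e)) (n - \<sigma> j)
          + \<psi> (f (Inl (head DG e))) (\<sigma> (head DK j))"
      by (simp add: xe endsH g_def)
    also have "\<dots> = W (f (Inl (tail DG e)) + f (Inr e) + f (Inl (head DG e)))
                       (\<sigma> (tail DK j) + (n - \<sigma> j) + \<sigma> (head DK j))"
      using pw[folded V_def E_def, folded N_def] fr1[OF tv(1)] fr1[OF tv(2)] fr2[OF xe(2)] \<sigma>le
      by (simp add: diff_le_self)
    also have "\<dots> = W k (c + n)" using s1 s2 by simp
    finally show ?thesis .
  qed
  have "edge_magic_labeling H g (W k (c + n))"
    unfolding edge_magic_labeling_def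
    using gb valence cH by (simp add: vH eH D_def)
  then show ?thesis by (auto simp: magic_set_def H_def)
qed

lemma psiA_bij:
  fixes N n :: nat
  shows "bij_betw (\<lambda>(m,r). (n+1)*(m-1)+r+1) ({1..N} \<times> {0..n}) {1..N*(n+1)}"
proof (rule bij_by_card)
  show "inj_on (\<lambda>(m,r). (n+1)*(m-1)+r+1) ({1..N} \<times> {0..n})"
  proof (rule inj_onI, clarify)
    fix m r m' r' :: nat
    assume "m \<in> {1..N}" "r \<in> {0..n}" "m' \<in> {1..N}" "r' \<in> {0..n}"
      "(n+1)*(m-1)+r+1 = (n+1)*(m'-1)+r'+1"
    then have "m - 1 = m' - 1 \<and> r = r'" using div_mod_unique_aux[of r "n+1" r' "m-1" "m'-1"] by auto
    then show "m = m' \<and> r = r'" using \<open>m \<in> {1..N}\<close> \<open>m' \<in> {1..N}\<close> by auto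
  qed
  show "(\<lambda>(m,r). (n+1)*(m-1)+r+1) ` ({1..N} \<times> {0..n}) \<subseteq> {1..N*(n+1)}"
  proof clarify
    fix m r :: nat assume a: "m \<in> {1..N}" "r \<in> {0..n}"
    have "(n+1)*(m-1)+r+1 \<le> (n+1)*(m-1) + (n+1)" using a by auto
    also have "\<dots> = (n+1)*m" using a by (cases m) (auto simp: algebra_simps)
    also have "\<dots> \<le> (n+1)*N" using a by (intro mult_le_mono2) auto
    finally show "(n+1)*(m-1)+r+1 \<in> {1..N*(n+1)}" by (simp add: mult.commute)
  qed
qed (auto simp: card_cartesian_product)

lemma psiB_bij:
  fixes N n :: nat
  shows "bij_betw (\<lambda>(m,r). m + N*r) ({1..N} \<times> {0..n}) {1..N*(n+1)}"
proof (rule bij_by_card)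
  show "inj_on (\<lambda>(m,r). m + N*r) ({1..N} \<times> {0..n})"
  proof (rule inj_onI, clarify)
    fix m r m' r' :: nat
    assume a: "m \<in> {1..N}" "r \<in> {0..n}" "m' \<in> {1..N}" "r' \<in> {0..n}"
      "m + N*r = m' + N*r'"
    then have "N * r + (m - 1) = N * r' + (m' - 1)" by auto
    then have "r = r' \<and> m - 1 = m' - 1" using div_mod_unique_aux[of "m-1" N "m'-1" r r'] a by auto
    then show "m = m' \<and> r = r'" using a by auto
  qed
  show "(\<lambda>(m,r). m + N*r) ` ({1..N} \<times> {0..n}) \<subseteq> {1..N*(n+1)}"
  proof clarify
    fix m r :: nat assume a: "m \<in> {1..N}" "r \<in> {0..n}"
    have "N*r \<le> N*n" using a by auto
    then have "m + N*r \<le> N + N*n" using a by (intro add_le_mono) auto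
    then have "m + N*r \<le> N*(n+1)" by (simp add: algebra_simps)
    then show "m + N*r \<in> {1..N*(n+1)}" using a by auto
  qed
qed (auto simp: card_cartesian_product)

lemma WA: fixes N n m1 m2 m3 r1 r2 r3 :: nat shows "m1 \<in> {1..N} \<Longrightarrow> m2 \<in> {1..N} \<Longrightarrow> m3 \<in> {1..N} \<Longrightarrow>
  (\<lambda>m r. (n+1)*(m-1)+r+1) m1 r1 + (\<lambda>m r. (n+1)*(m-1)+r+1) m2 r2 + (\<lambda>m r. (n+1)*(m-1)+r+1) m3 r3
  = (\<lambda>s t. (n+1)*(s-3)+t+3) (m1+m2+m3) (r1+r2+r3)"
  by (cases m1; cases m2; cases m3) (auto simp: algebra_simps)

lemma WB: fixes N m1 m2 m3 r1 r2 r3 :: nat shows "(\<lambda>m r. m + N*r) m1 r1 + (\<lambda>m r. m + N*r) m2 r2 + (\<lambda>m r. m + N*r) m3 r3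
  = (\<lambda>s t. s + N*t) (m1+m2+m3) (r1+r2+r3)"
  by (simp add: algebra_simps)

lemma wf_prod:
  assumes "wf_ugraph G" "is_orientation G DG" "is_orientation (star_loop n) DK"
  shows "wf_ugraph (underlying (otimes DG DK))"
proof -
  have fv: "finite (uverts G)" "finite (uedges G)" using assms(1) by (auto simp: wf_ugraph_def)
  { fix e j assume e: "e \<in> uedges G" "j \<le> n"
    have "tail DG e \<in> uverts G \<and> head DG e \<in> uverts G"
      using assms(1,2) e by (auto simp: wf_ugraph_def is_orientation_def)
         (metis fst_conv snd_conv)+
    moreover have "tail DK j \<le> n \<and> head DK j \<le> n"
    proof -
      have "(tail DK j, head DK j) = (0, j) \<or> (head DK j, tail DK j) = (0, j)"
        using assms(3) e by (auto simp: is_orientation_def star_loop_def)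
      then show ?thesis using e by auto
    qed
    ultimately have "tail DG e \<in> uverts G \<and> head DG e \<in> uverts G \<and> tail DK j \<le> n \<and> head DK j \<le> n"
      by blast }
  then show ?thesis using assms fv
    by (auto simp: wf_ugraph_def underlying_def otimes_def is_orientation_def star_loop_def)
qed

lemma ms_bound:
  assumes "wf_ugraph G" "uedges G \<noteq> {}"
  shows "magic_set G \<subseteq> {3..3*(card (uverts G) + card (uedges G))}"
proof
  fix k assume "k \<in> magic_set G"
  then obtain f where lab: "edge_magic_labeling G f k" by (auto simp: magic_set_def)
  obtain e where e: "e \<in> uedges G" using assms(2) by auto
  let ?D = "Inl ` uverts G \<union> Inr ` uedges G"
  let ?N = "card (uverts G) + card (uedges G)"
  have im: "f ` ?D = {1..?N}" using lab by (simp add: edge_magic_labeling_def bij_betw_def)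
  have mem: "Inl (fst (uends G e)) \<in> ?D" "Inr e \<in> ?D" "Inl (snd (uends G e)) \<in> ?D"
    using assms(1) e by (auto simp: wf_ugraph_def)
  have "f (Inl (fst (uends G e))) \<in> {1..?N}" "f (Inr e) \<in> {1..?N}" "f (Inl (snd (uends G e))) \<in> {1..?N}"
    using mem im by blast+
  moreover have "k = f (Inl (fst (uends G e))) + f (Inr e) + f (Inl (snd (uends G e)))"
    using lab e by (simp add: edge_magic_labeling_def)
  ultimately show "k \<in> {3..3*?N}" by auto
qed

lemma ms_dual:
  assumes "wf_ugraph G" "k \<in> magic_set G"
  shows "3*(card (uverts G) + card (uedges G) + 1) - k \<in> magic_set G"
proof -
  let ?D = "Inl ` uverts G \<union> Inr ` uedges G"
  let ?N = "card (uverts G) + card (uedges G)"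
  obtain f where lab: "edge_magic_labeling G f k" using assms(2) by (auto simp: magic_set_def)
  have fb: "bij_betw f ?D {1..?N}" using lab by (simp add: edge_magic_labeling_def)
  have rb: "bij_betw (\<lambda>m. ?N + 1 - m) {1..?N} {1..?N}"
    by (rule bij_betw_byWitness[where f'="\<lambda>m. ?N + 1 - m"]) auto
  have b: "bij_betw ((\<lambda>m. ?N + 1 - m) \<circ> f) ?D {1..?N}" by (rule bij_betw_trans[OF fb rb])
  have im: "f ` ?D = {1..?N}" using fb by (simp add: bij_betw_def)
  have "((\<lambda>m. ?N + 1 - m) \<circ> f) (Inl (fst (uends G e))) + ((\<lambda>m. ?N + 1 - m) \<circ> f) (Inr e)
        + ((\<lambda>m. ?N + 1 - m) \<circ> f) (Inl (snd (uends G e))) = 3*(?N + 1) - k"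
    if e: "e \<in> uedges G" for e
  proof -
    have mem: "Inl (fst (uends G e)) \<in> ?D" "Inr e \<in> ?D" "Inl (snd (uends G e)) \<in> ?D"
      using assms(1) e by (auto simp: wf_ugraph_def)
    have "f (Inl (fst (uends G e))) \<in> {1..?N}" "f (Inr e) \<in> {1..?N}" "f (Inl (snd (uends G e))) \<in> {1..?N}"
      using mem im by blast+
    moreover have "k = f (Inl (fst (uends G e))) + f (Inr e) + f (Inl (snd (uends G e)))"
      using lab e by (simp add: edge_magic_labeling_def)
    ultimately show ?thesis by auto
  qed
  then have "edge_magic_labeling G ((\<lambda>m. ?N + 1 - m) \<circ> f) (3*(?N + 1) - k)"
    using b by (simp add: edge_magic_labeling_def)
  then show ?thesis by (auto simp: magic_set_def)
qed


theorem mainTheorem3: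
  fixes G :: "('v,'e) ugraph" and n :: nat
    and DG :: "('v,'e) pre_digraph" and DK :: "(nat,nat) pre_digraph"
  assumes "wf_ugraph G" and "edge_magic G" and "n \<ge> 1"
    and "int (Max (magic_set G)) - int (Min (magic_set G))
          < (int (Min (magic_set G)) - int (card (uverts G) + card (uedges G) + 2)) * int n"
    and "is_orientation G DG" and "is_orientation (star_loop n) DK"
  shows "card (magic_set (underlying (otimes DG DK))) \<ge> (n + 3) * card (magic_set G)"
proof (cases "uedges G = {}")
  case True
  obtain f k where lab: "edge_magic_labeling G f k" using assms(2) by (auto simp: edge_magic_def)
  have "edge_magic_labeling G f k'" for k' using lab True by (simp add: edge_magic_labeling_def)
  then have "magic_set G = UNIV" by (auto simp: magic_set_def)
  then show ?thesis by simp
next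
  case False
  note wf = assms(1) and hyp = assms(4) and oG = assms(5) and oK = assms(6)
  define N where "N = card (uverts G) + card (uedges G)"
  define T where "T = magic_set G"
  define TH where "TH = magic_set (underlying (otimes DG DK))"
  define \<alpha> where "\<alpha> = Min T"
  define \<beta> where "\<beta> = Max T"
  have Tb: "T \<subseteq> {3..3*N}" using ms_bound[OF wf False] by (simp add: T_def N_def)
  have finT: "finite T" using Tb finite_subset by blast
  have neT: "T \<noteq> {}" using assms(2) by (auto simp: edge_magic_def T_def magic_set_def)
  have \<alpha>T: "\<alpha> \<in> T" and \<beta>T: "\<beta> \<in> T" using finT neT by (simp_all add: \<alpha>_def \<beta>_def)
  have \<alpha>le: "\<alpha> \<le> k" and le\<beta>: "k \<le> \<beta>" if "k \<in> T" for k
    using finT that by (simp_all add: \<alpha>_def \<beta>_def)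
  have ge3: "3 \<le> k" if "k \<in> T" for k using Tb that by auto
  have \<beta>le: "\<beta> \<le> 3*N" using Tb \<beta>T by auto
  have "3*(N+1) - \<beta> \<in> T" using ms_dual[OF wf, of \<beta>] \<beta>T by (simp add: T_def N_def)
  then have "\<alpha> \<le> 3*(N+1) - \<beta>" using \<alpha>le by blast
  then have \<alpha>\<beta>: "\<alpha> + \<beta> \<le> 3*(N+1)" using \<beta>le by arith
  have hyp': "int \<beta> - int \<alpha> < (int \<alpha> - int (N + 2)) * int n"
    using hyp by (simp add: \<alpha>_def \<beta>_def T_def N_def)
  have "int (\<beta> + N*n + 2*n) < int ((n+1)*\<alpha>)"
    using hyp' by (simp add: algebra_simps)
  then have H1: "\<beta> + N*n + 2*n < (n+1)*\<alpha>" by linarith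
  have "int \<alpha> - int (N + 2) \<le> int (2*N+1) - int \<beta>" using \<alpha>\<beta> by simp
  then have "(int \<alpha> - int (N + 2)) * int n \<le> (int (2*N+1) - int \<beta>) * int n"
    by (rule mult_right_mono) simp
  then have "int ((n+1)*\<beta>) < int (\<alpha> + 2*N*n + n)" using hyp' by (simp add: algebra_simps)
  then have H2: "(n+1)*\<beta> < \<alpha> + 2*N*n + n" by linarith
  have wfH: "wf_ugraph (underlying (otimes DG DK))" by (rule wf_prod[OF wf oG oK])
  have "uedges (underlying (otimes DG DK)) = uedges G \<times> arcs DK"
    using oG by (simp add: underlying_def otimes_def is_orientation_def)
  moreover have "arcs DK = {0..n}" using oK by (simp add: is_orientation_def star_loop_def)
  ultimately have "uedges (underlying (otimes DG DK)) \<noteq> {}" using False by auto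
  then have finTH: "finite TH" using ms_bound[OF wfH] finite_subset unfolding TH_def by blast
  define \<Phi> where "\<Phi> = (\<lambda>(k,t). if t \<le> n then (n+1)*(k-3)+(t+n)+3
                        else if t = n+1 then k + N*(0+n) else k + N*(n+n))"
  define S where "S = T \<times> {0..n+2}"
  have img: "\<Phi> ` S \<subseteq> TH"
  proof clarify
    fix k t assume kt: "(k,t) \<in> S"
    then have kT: "k \<in> T" and t: "t \<le> n+2" by (auto simp: S_def)
    obtain f where lab: "edge_magic_labeling G f k" using kT by (auto simp: T_def magic_set_def)
    show "\<Phi> (k,t) \<in> TH"
    proof (cases "t \<le> n")
      case True
      have pwA: "\<And>m1 m2 m3 r1 r2 r3. m1 \<in> {1..N} \<Longrightarrow> m2 \<in> {1..N} \<Longrightarrow> m3 \<in> {1..N} \<Longrightarrow>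
          r1 \<le> n \<Longrightarrow> r2 \<le> n \<Longrightarrow> r3 \<le> n \<Longrightarrow>
          (n+1)*(m1-1)+r1+1 + ((n+1)*(m2-1)+r2+1) + ((n+1)*(m3-1)+r3+1)
          = (n+1)*(m1+m2+m3-3)+(r1+r2+r3)+3"
        using WA[of _ N] by simp
      have "(\<lambda>s t. (n+1)*(s-3)+t+3) k (t + n) \<in> TH"
        unfolding TH_def
        by (rule prod_lab[where W="\<lambda>s t. (n+1)*(s-3)+t+3",
              OF wf oG oK lab True psiA_bij[where N=N and n=n, unfolded N_def] pwA[unfolded N_def]])
      then show ?thesis using True by (simp add: \<Phi>_def)
    next
      case False
      show ?thesis
      proof (cases "t = n+1")
        case True
        have "(\<lambda>s t. s + N*t) k (0 + n) \<in> TH"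
          unfolding TH_def N_def
          by (rule prod_lab[where W="\<lambda>s t. s + (card (uverts G) + card (uedges G))*t",
              OF wf oG oK lab _ psiB_bij]) (auto simp: algebra_simps)
        then show ?thesis using True by (simp add: \<Phi>_def)
      next
        case False2: False
        have "(\<lambda>s t. s + N*t) k (n + n) \<in> TH"
          unfolding TH_def N_def
          by (rule prod_lab[where W="\<lambda>s t. s + (card (uverts G) + card (uedges G))*t",
              OF wf oG oK lab _ psiB_bij]) (auto simp: algebra_simps)
        then show ?thesis using False False2 by (simp add: \<Phi>_def)
      qed
    qed
  qed
  have Aid: "(n+1)*(k-3)+(t+n)+3 + 2*n = (n+1)*k + t" if "3 \<le> k" for k t
  proof -
    have "k = (k - 3) + 3" using that by simp
    then obtain k' where kk: "k = k' + 3" by blast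
    show ?thesis unfolding kk by (simp add: algebra_simps)
  qed
  have Alo: "(n+1)*\<alpha> \<le> (n+1)*(k-3)+(t+n)+3 + 2*n" if "k \<in> T" for k t
    using Aid[OF ge3[OF that], of t] mult_le_mono2[OF \<alpha>le[OF that], of "n+1"] by linarith
  have Ahi: "(n+1)*(k-3)+(t+n)+3 + 2*n \<le> (n+1)*\<beta> + n" if "k \<in> T" "t \<le> n" for k t
    using Aid[OF ge3[OF that(1)], of t] mult_le_mono2[OF le\<beta>[OF that(1)], of "n+1"] that(2)
    by linarith
  have inj: "inj_on \<Phi> S"
  proof (rule inj_onI, clarify)
    fix k t k' t' assume a: "(k,t) \<in> S" "(k',t') \<in> S" "\<Phi> (k,t) = \<Phi> (k',t')"
    then have kT: "k \<in> T" "k' \<in> T" and tt: "t \<le> n+2" "t' \<le> n+2" by (auto simp: S_def)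
    note bnd = \<alpha>le[OF kT(1)] \<alpha>le[OF kT(2)] le\<beta>[OF kT(1)] le\<beta>[OF kT(2)]
    consider "t \<le> n" | "t = n+1" | "t = n+2" using tt by linarith
    then show "k = k' \<and> t = t'"
    proof cases
      case 1
      consider "t' \<le> n" | "t' = n+1" | "t' = n+2" using tt by linarith
      then show ?thesis
      proof cases
        case 1
        have "(n+1)*k + t = (n+1)*k' + t'"
          using a(3) \<open>t \<le> n\<close> 1 Aid[OF ge3[OF kT(1)], of t] Aid[OF ge3[OF kT(2)], of t']
          by (simp add: \<Phi>_def)
        then show ?thesis using div_mod_unique_aux[of t "n+1" t' k k'] \<open>t \<le> n\<close> 1 by auto
      next
        case 2
        then have False using a(3) \<open>t \<le> n\<close> Alo[OF kT(1), of t] H1 bnd by (simp add: \<Phi>_def)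
        then show ?thesis ..
      next
        case 3
        have eq: "(n+1)*(k-3)+(t+n)+3 = k' + N*(n+n)" using a(3) 3 \<open>t \<le> n\<close> by (simp add: \<Phi>_def)
        have "N*(n+n) = 2*N*n" by simp
        then have False using eq Ahi[OF kT(1) \<open>t \<le> n\<close>] H2 bnd by linarith
        then show ?thesis ..
      qed
    next
      case 2
      consider "t' \<le> n" | "t' = n+1" | "t' = n+2" using tt by linarith
      then show ?thesis
      proof cases
        case 1
        then have False using a(3) \<open>t = n+1\<close> Alo[OF kT(2), of t'] H1 bnd by (simp add: \<Phi>_def)
        then show ?thesis ..
      next
        case 2
        then show ?thesis using a(3) \<open>t = n+1\<close> by (simp add: \<Phi>_def)
      next
        case 3
        have "(n+1)*\<alpha> \<le> (n+1)*\<beta>" using \<alpha>le[OF \<beta>T] by (intro mult_le_mono2)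
        then have "N*n + N*n + \<alpha> > N*n + \<beta>" using H1 H2 by linarith
        then have False using a(3) \<open>t = n+1\<close> 3 bnd by (simp add: \<Phi>_def algebra_simps)
        then show ?thesis ..
      qed
    next
      case 3
      consider "t' \<le> n" | "t' = n+1" | "t' = n+2" using tt by linarith
      then show ?thesis
      proof cases
        case 1
        have eq: "(n+1)*(k'-3)+(t'+n)+3 = k + N*(n+n)" using a(3) 1 \<open>t = n+2\<close> by (simp add: \<Phi>_def)
        have "N*(n+n) = 2*N*n" by simp
        then have False using eq Ahi[OF kT(2) 1] H2 bnd by linarith
        then show ?thesis ..
      next
        case 2
        have "(n+1)*\<alpha> \<le> (n+1)*\<beta>" using \<alpha>le[OF \<beta>T] by (intro mult_le_mono2)
        then have "N*n + N*n + \<alpha> > N*n + \<beta>" using H1 H2 by linarith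
        then have False using a(3) \<open>t = n+2\<close> 2 bnd by (simp add: \<Phi>_def algebra_simps)
        then show ?thesis ..
      next
        case 3
        then show ?thesis using a(3) \<open>t = n+2\<close> by (simp add: \<Phi>_def)
      qed
    qed
  qed
  have cS: "card S = card T * (n+3)" by (simp add: S_def card_cartesian_product algebra_simps)
  have cI: "card (\<Phi> ` S) = card S" using inj by (simp add: card_image)
  have "card (\<Phi> ` S) \<le> card TH" by (rule card_mono[OF finTH img])
  then show ?thesis using cS cI by (simp add: TH_def T_def mult.commute)
qed

end
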